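(* Let $G_1$ be a group and $k\ge1$ an integer such that $|G_1:C_{G_1}(a)|\le k$ for every $a\in G_1$. Let $n,m\ge0$, let $G\le G_1^n$ be a subgroup, let $w(\bar x,\bar y)$ be a group word in the variables $\bar x=(x_1,\dots,x_n)$, $\bar y=(y_1,\dots,y_m)$ and their inverses, and let $\bar g\in G_1^m$, $c\in G_1$. If the set $\{\bar h\in G:w(\bar h,\bar g)=c\}$ is $2k^{n^2+mn}$-large in $G$, then $w(\bar h,\bar g)=c$ for all $\bar h\in G$.
   Context: A subset $X\subseteq G$ is $k$-large in $G$ if the intersection of any $k$ left translates $\bar a_1X\cap\dots\cap\bar a_kX$ ($\bar a_i\in G$) is non-empty. *)

theory Defs
  imports "HOL-Algebra.Algebra"
begin

definition centralizer_elem :: "('a, 'b) monoid_scheme \<Rightarrow> 'a \<Rightarrow> 'a set" where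
  "centralizer_elem G a = {x \<in> carrier G. x \<otimes>\<^bsub>G\<^esub> a = a \<otimes>\<^bsub>G\<^esub> x}"

definition k_large :: "('a, 'b) monoid_scheme \<Rightarrow> 'a set \<Rightarrow> nat \<Rightarrow> 'a set \<Rightarrow> bool" where
  "k_large P H K S \<longleftrightarrow>
     (\<forall>a :: nat \<Rightarrow> 'a. (\<forall>i<K. a i \<in> H) \<longrightarrow> (\<Inter>i<K. l_coset P (a i) S) \<noteq> {})"

text \<open>Group words in variables x_i (Inl i) and y_j (Inr j) and their inverses:
  a letter (v, True) stands for v, a letter (v, False) for v inverse.\<close>
type_synonym gword = "((nat + nat) \<times> bool) list"

definition word_in_vars :: "nat \<Rightarrow> nat \<Rightarrow> gword \<Rightarrow> bool" where
  "word_in_vars n m w \<longleftrightarrow>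
     (\<forall>(v, b) \<in> set w. case v of Inl i \<Rightarrow> i < n | Inr j \<Rightarrow> j < m)"

fun word_eval :: "('a, 'b) monoid_scheme \<Rightarrow> gword \<Rightarrow> (nat \<Rightarrow> 'a) \<Rightarrow> (nat \<Rightarrow> 'a) \<Rightarrow> 'a" where
  "word_eval G [] h g = \<one>\<^bsub>G\<^esub>"
| "word_eval G ((v, b) # w) h g =
     (let z = case_sum h g v in if b then z else inv\<^bsub>G\<^esub> z) \<otimes>\<^bsub>G\<^esub> word_eval G w h g"

end

theory Submission
  imports Defs
begin

lemma wiv_Cons: "word_in_vars n m ((v,b)#w) \<longleftrightarrow> (case v of Inl i \<Rightarrow> i < n | Inr j \<Rightarrow> j < m) \<and> word_in_vars n m w"
  by (auto simp: word_in_vars_def)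

lemma (in group) comm_inv: "z \<in> carrier G \<Longrightarrow> a \<in> carrier G \<Longrightarrow> z \<otimes> a = a \<otimes> z \<Longrightarrow> z \<otimes> inv a = inv a \<otimes> z"
  by (metis inv_closed inv_solve_left inv_solve_right m_assoc m_closed)

lemma word_eval_closed:
  assumes "group G1" "word_in_vars n m w" "\<forall>i<n. h i \<in> carrier G1" "\<forall>j<m. g j \<in> carrier G1"
  shows "word_eval G1 w h g \<in> carrier G1"
  using assms(2)
proof (induction w)
  case Nil then show ?case using group.is_monoid[OF assms(1)] by (simp add: monoid.one_closed)
next
  case (Cons a w)
  interpret group G1 by fact
  obtain v b where a: "a = (v,b)" by force
  show ?case using Cons assms(1,3,4) unfolding a
    by (auto simp: wiv_Cons Let_def split: sum.splits)
qed

lemma word_eval_comm: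
  assumes gr: "group G1" "word_in_vars n m w" "\<forall>i<n. h i \<in> carrier G1" "\<forall>j<m. g j \<in> carrier G1"
    and z: "z \<in> carrier G1" "\<forall>i<n. z \<otimes>\<^bsub>G1\<^esub> h i = h i \<otimes>\<^bsub>G1\<^esub> z" "\<forall>j<m. z \<otimes>\<^bsub>G1\<^esub> g j = g j \<otimes>\<^bsub>G1\<^esub> z"
  shows "z \<otimes>\<^bsub>G1\<^esub> word_eval G1 w h g = word_eval G1 w h g \<otimes>\<^bsub>G1\<^esub> z"
  using assms(2)
proof (induction w)
  case Nil then show ?case using z gr by (simp add: group.is_monoid monoid.l_one monoid.r_one)
next
  case (Cons a w)
  interpret group G1 by fact
  obtain v b where a: "a = (v,b)" by force
  have wc: "word_eval G1 w h g \<in> carrier G1" using Cons.prems word_eval_closed[OF gr(1) _ gr(3,4)] unfolding a wiv_Cons by blast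
  define y where "y = (let z = case_sum h g v in if b then z else inv\<^bsub>G1\<^esub> z)"
  have yc: "y \<in> carrier G1" and yz: "z \<otimes>\<^bsub>G1\<^esub> y = y \<otimes>\<^bsub>G1\<^esub> z"
    using Cons.prems gr z comm_inv unfolding a y_def wiv_Cons by (auto simp: Let_def split: sum.splits)
  have IH: "z \<otimes>\<^bsub>G1\<^esub> word_eval G1 w h g = word_eval G1 w h g \<otimes>\<^bsub>G1\<^esub> z"
    using Cons unfolding a wiv_Cons by blast
  have "z \<otimes>\<^bsub>G1\<^esub> (y \<otimes>\<^bsub>G1\<^esub> word_eval G1 w h g) = (y \<otimes>\<^bsub>G1\<^esub> word_eval G1 w h g) \<otimes>\<^bsub>G1\<^esub> z"
    by (metis IH yz m_assoc wc yc z(1))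
  then show ?case unfolding a by (simp add: y_def)
qed

lemma word_eval_mult:
  assumes gr: "group G1" "word_in_vars n m w" "\<forall>i<n. h i \<in> carrier G1" "\<forall>j<m. g j \<in> carrier G1"
    and d: "\<forall>i<n. d i \<in> carrier G1"
    "\<forall>i<n. \<forall>i'<n. d i \<otimes>\<^bsub>G1\<^esub> h i' = h i' \<otimes>\<^bsub>G1\<^esub> d i"
    "\<forall>i<n. \<forall>j<m. d i \<otimes>\<^bsub>G1\<^esub> g j = g j \<otimes>\<^bsub>G1\<^esub> d i"
  shows "word_eval G1 w (\<lambda>i. h i \<otimes>\<^bsub>G1\<^esub> d i) g = word_eval G1 w h g \<otimes>\<^bsub>G1\<^esub> word_eval G1 w d (\<lambda>_. \<one>\<^bsub>G1\<^esub>)"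
  using assms(2)
proof (induction w)
  case Nil then show ?case using gr by (simp add: group.is_monoid monoid.l_one monoid.r_one)
next
  case (Cons a w)
  interpret group G1 by fact
  obtain v b where a: "a = (v,b)" by force
  have w: "word_in_vars n m w" using Cons.prems unfolding a wiv_Cons by blast
  have IH: "word_eval G1 w (\<lambda>i. h i \<otimes>\<^bsub>G1\<^esub> d i) g = word_eval G1 w h g \<otimes>\<^bsub>G1\<^esub> word_eval G1 w d (\<lambda>_. \<one>\<^bsub>G1\<^esub>)"
    using Cons w by blast
  have Wh: "word_eval G1 w h g \<in> carrier G1" using word_eval_closed[OF gr(1) w gr(3,4)] .
  have Wd: "word_eval G1 w d (\<lambda>_. \<one>\<^bsub>G1\<^esub>) \<in> carrier G1" using word_eval_closed[OF gr(1) w d(1)] by simp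
  have cm: "z \<otimes>\<^bsub>G1\<^esub> word_eval G1 w h g = word_eval G1 w h g \<otimes>\<^bsub>G1\<^esub> z"
    if "z \<in> carrier G1" "\<forall>i<n. z \<otimes>\<^bsub>G1\<^esub> h i = h i \<otimes>\<^bsub>G1\<^esub> z" "\<forall>j<m. z \<otimes>\<^bsub>G1\<^esub> g j = g j \<otimes>\<^bsub>G1\<^esub> z" for z
    using word_eval_comm[OF gr(1) w gr(3,4) that] .
  show ?case
  proof (cases v)
    case (Inl i)
    then have i: "i < n" using Cons.prems unfolding a wiv_Cons by simp
    have hi: "h i \<in> carrier G1" and di: "d i \<in> carrier G1" using i gr d by auto
    have c1: "d i \<otimes>\<^bsub>G1\<^esub> word_eval G1 w h g = word_eval G1 w h g \<otimes>\<^bsub>G1\<^esub> d i"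
      using cm[OF di] d i by auto
    have c2: "inv\<^bsub>G1\<^esub> (d i) \<otimes>\<^bsub>G1\<^esub> word_eval G1 w h g = word_eval G1 w h g \<otimes>\<^bsub>G1\<^esub> inv\<^bsub>G1\<^esub> (d i)"
      using cm[of "inv\<^bsub>G1\<^esub> (d i)"] d i gr comm_inv by (metis inv_closed)
    have dh: "d i \<otimes>\<^bsub>G1\<^esub> h i = h i \<otimes>\<^bsub>G1\<^esub> d i" using d i by auto
    show ?thesis
    proof (cases b)
      case True
      have "h i \<otimes>\<^bsub>G1\<^esub> d i \<otimes>\<^bsub>G1\<^esub> (word_eval G1 w h g \<otimes>\<^bsub>G1\<^esub> word_eval G1 w d (\<lambda>_. \<one>\<^bsub>G1\<^esub>))
          = h i \<otimes>\<^bsub>G1\<^esub> word_eval G1 w h g \<otimes>\<^bsub>G1\<^esub> (d i \<otimes>\<^bsub>G1\<^esub> word_eval G1 w d (\<lambda>_. \<one>\<^bsub>G1\<^esub>))"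
        by (metis c1 Wh Wd hi di m_assoc m_closed)
      then show ?thesis using Inl True IH unfolding a by simp
    next
      case False
      have e: "inv\<^bsub>G1\<^esub> (h i \<otimes>\<^bsub>G1\<^esub> d i) = inv\<^bsub>G1\<^esub> (h i) \<otimes>\<^bsub>G1\<^esub> inv\<^bsub>G1\<^esub> (d i)"
        by (metis dh di hi inv_mult_group)
      have "inv\<^bsub>G1\<^esub> (h i) \<otimes>\<^bsub>G1\<^esub> inv\<^bsub>G1\<^esub> (d i) \<otimes>\<^bsub>G1\<^esub> (word_eval G1 w h g \<otimes>\<^bsub>G1\<^esub> word_eval G1 w d (\<lambda>_. \<one>\<^bsub>G1\<^esub>))
          = inv\<^bsub>G1\<^esub> (h i) \<otimes>\<^bsub>G1\<^esub> word_eval G1 w h g \<otimes>\<^bsub>G1\<^esub> (inv\<^bsub>G1\<^esub> (d i) \<otimes>\<^bsub>G1\<^esub> word_eval G1 w d (\<lambda>_. \<one>\<^bsub>G1\<^esub>))"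
        by (metis c2 Wh Wd hi di m_assoc m_closed inv_closed)
      then show ?thesis using Inl False IH e unfolding a by simp
    qed
  next
    case (Inr j)
    then have j: "j < m" using Cons.prems unfolding a wiv_Cons by simp
    then have gj: "g j \<in> carrier G1" using gr by auto
    show ?thesis using Inr IH gj Wh Wd unfolding a by (cases b) (auto simp: m_assoc)
  qed
qed

lemma word_eval_cong:
  assumes "word_in_vars n m w" "\<forall>i<n. h i = h' i"
  shows "word_eval G1 w h g = word_eval G1 w h' g"
  using assms(1)
proof (induction w)
  case Nil then show ?case by simp
next
  case (Cons a w)
  obtain v b where a: "a = (v,b)" by force
  show ?case using Cons assms(2) unfolding a wiv_Cons by (auto split: sum.splits)
qed

lemma rcos_eq_mem:
  assumes "group G1" "H \<subseteq> carrier G1" "\<one>\<^bsub>G1\<^esub> \<in> H" "u \<in> carrier G1" "v \<in> carrier G1"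
    "H #>\<^bsub>G1\<^esub> u = H #>\<^bsub>G1\<^esub> v"
  shows "u \<otimes>\<^bsub>G1\<^esub> inv\<^bsub>G1\<^esub> v \<in> H"
proof -
  interpret group G1 by fact
  have "u \<in> H #>\<^bsub>G1\<^esub> u" using assms(3,4) unfolding r_coset_def by force
  then have "u \<in> H #>\<^bsub>G1\<^esub> v" using assms(6) by simp
  then obtain y where y: "y \<in> H" "u = y \<otimes>\<^bsub>G1\<^esub> v" unfolding r_coset_def by blast
  then have "u \<otimes>\<^bsub>G1\<^esub> inv\<^bsub>G1\<^esub> v = y" using assms(2,5)
    by (simp add: m_assoc subsetD)
  then show ?thesis using y by simp
qed

theorem theorem3p3:
  fixes G1 :: "('a, 'c) monoid_scheme" and k n m :: nat
    and G :: "(nat \<Rightarrow> 'a) set" and w :: gword and g :: "nat \<Rightarrow> 'a" and c :: 'a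
  assumes "group G1"
    and "k \<ge> 1"
    and "\<And>a. a \<in> carrier G1 \<Longrightarrow>
           finite (rcosets\<^bsub>G1\<^esub> (centralizer_elem G1 a)) \<and>
           card (rcosets\<^bsub>G1\<^esub> (centralizer_elem G1 a)) \<le> k"
    and "subgroup G (product_group {..<n} (\<lambda>_. G1))"
    and "word_in_vars n m w"
    and "\<forall>j<m. g j \<in> carrier G1"
    and "c \<in> carrier G1"
    and "k_large (product_group {..<n} (\<lambda>_. G1)) G (2 * k ^ (n\<^sup>2 + m * n))
           {h \<in> G. word_eval G1 w h g = c}"
  shows "\<forall>h \<in> G. word_eval G1 w h g = c"
proof -
  note gr = assms(1)
  interpret G1: group G1 by fact
  define P where "P = product_group {..<n} (\<lambda>_. G1)"
  have grP: "group P" unfolding P_def using gr by simp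
  interpret P: group P by fact
  have sub: "subgroup G P" using assms(4) P_def by simp
  have GP: "G \<subseteq> carrier P" using sub by (rule subgroup.subset)
  have Gc: "\<And>x i. x \<in> G \<Longrightarrow> i < n \<Longrightarrow> x i \<in> carrier G1"
    using GP unfolding P_def by (auto simp: PiE_iff)
  have multP: "\<And>x y i. i < n \<Longrightarrow> (x \<otimes>\<^bsub>P\<^esub> y) i = x i \<otimes>\<^bsub>G1\<^esub> y i"
    unfolding P_def by simp
  define S where "S = {h \<in> G. word_eval G1 w h g = c}"
  define K where "K = 2 * k ^ (n\<^sup>2 + m * n)"
  have large: "\<forall>a :: nat \<Rightarrow> (nat \<Rightarrow> 'a). (\<forall>i<K. a i \<in> G) \<longrightarrow> (\<Inter>i<K. a i <#\<^bsub>P\<^esub> S) \<noteq> {}"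
    using assms(8) unfolding k_large_def K_def S_def P_def by blast
  define one1 where "one1 = (\<lambda>_::nat. \<one>\<^bsub>G1\<^esub>)"
  have key: "\<exists>d\<in>G. d \<in> S \<and> h0 \<otimes>\<^bsub>P\<^esub> d \<in> S \<and>
      (\<forall>i<n. \<forall>i'<n. d i \<otimes>\<^bsub>G1\<^esub> h0 i' = h0 i' \<otimes>\<^bsub>G1\<^esub> d i) \<and>
      (\<forall>i<n. \<forall>j<m. d i \<otimes>\<^bsub>G1\<^esub> g j = g j \<otimes>\<^bsub>G1\<^esub> d i)" if h0: "h0 \<in> G" for h0
  proof -
    define \<tau> where "\<tau> = case_sum h0 g"
    define I where "I = {..<n} \<times> (Inl ` {..<n} \<union> Inr ` {..<m})"
    define B where "B = (\<lambda>(i::nat, v). rcosets\<^bsub>G1\<^esub> (centralizer_elem G1 (\<tau> v)))"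
    define \<sigma> where "\<sigma> = (\<lambda>x. \<lambda>(i,v)\<in>I. centralizer_elem G1 (\<tau> v) #>\<^bsub>G1\<^esub> inv\<^bsub>G1\<^esub> (x i))"
    have \<tau>c: "\<tau> v \<in> carrier G1" if "v \<in> Inl ` {..<n} \<union> Inr ` {..<m}" for v
      using that h0 Gc assms(6) unfolding \<tau>_def by auto
    have Csub: "centralizer_elem G1 a \<subseteq> carrier G1" for a
      unfolding centralizer_elem_def by auto
    have finI: "finite I" unfolding I_def by simp
    have cardI: "card I = n\<^sup>2 + m * n"
    proof -
      have "card (Inl ` {..<n} \<union> Inr ` {..<m} :: (nat+nat) set) = n + m"
        by (subst card_Un_disjoint) (auto simp: card_image)
      then show ?thesis unfolding I_def by (simp add: card_cartesian_product power2_eq_square algebra_simps)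
    qed
    have \<sigma>B: "\<sigma> ` G \<subseteq> PiE I B"
    proof
      fix y assume "y \<in> \<sigma> ` G"
      then obtain x where x: "x \<in> G" "y = \<sigma> x" by blast
      show "y \<in> PiE I B" unfolding x \<sigma>_def B_def
        using \<tau>c Gc[OF x(1)] Csub by (auto simp: I_def intro!: G1.rcosetsI)
    qed
    have finB: "finite (PiE I B)"
      using finI \<tau>c assms(3) by (intro finite_PiE) (auto simp: B_def I_def)
    have cardB: "card (PiE I B) \<le> k ^ (n\<^sup>2 + m * n)"
    proof -
      have "card (PiE I B) = (\<Prod>i\<in>I. card (B i))" by (rule card_PiE[OF finI])
      also have "\<dots> \<le> k ^ card I"
        using assms(2) \<tau>c assms(3) by (intro prod_le_power) (auto simp: B_def I_def)
      finally show ?thesis using cardI by simp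
    qed
    define R where "R = inv_into G \<sigma> ` (\<sigma> ` G)"
    have RG: "R \<subseteq> G" unfolding R_def by (auto intro: inv_into_into)
    have finR: "finite R" unfolding R_def using finB \<sigma>B finite_subset by blast
    have cardR: "card R \<le> k ^ (n\<^sup>2 + m * n)"
    proof -
      have "card R \<le> card (\<sigma> ` G)" unfolding R_def by (rule card_image_le) (use finB \<sigma>B finite_subset in blast)
      also have "\<dots> \<le> card (PiE I B)" by (rule card_mono[OF finB \<sigma>B])
      finally show ?thesis using cardB by simp
    qed
    obtain rs where rs: "distinct rs" "set rs = R" using finite_distinct_list[OF finR] by blast
    define L where "L = length rs"
    have L: "2 * L \<le> K" using distinct_card[OF rs(1)] rs(2) cardR unfolding K_def L_def by simp
    have kpos: "0 < K" unfolding K_def using assms(2) by simp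
    define a where "a = (\<lambda>i. if i < L then rs!i else if i < 2*L then rs!(i-L) \<otimes>\<^bsub>P\<^esub> inv\<^bsub>P\<^esub> h0 else \<one>\<^bsub>P\<^esub>)"
    have rsG: "rs!i \<in> G" if "i < L" for i
    proof -
      have "rs!i \<in> set rs" using that unfolding L_def by (rule nth_mem)
      then show ?thesis using RG rs(2) by blast
    qed
    have aG: "\<forall>i<K. a i \<in> G"
    proof (intro allI impI)
      fix i assume "i < K"
      consider "i < L" | "\<not> i < L" "i < 2*L" | "\<not> i < 2*L" by linarith
      then show "a i \<in> G"
      proof cases
        case 1 then show ?thesis using rsG unfolding a_def by simp
      next
        case 2
        have "rs!(i-L) \<in> G" using rsG 2 by simp
        moreover have "inv\<^bsub>P\<^esub> h0 \<in> G" using subgroup.m_inv_closed[OF sub h0] .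
        ultimately have "rs!(i-L) \<otimes>\<^bsub>P\<^esub> inv\<^bsub>P\<^esub> h0 \<in> G" by (rule subgroup.m_closed[OF sub])
        then show ?thesis using 2 unfolding a_def by simp
      next
        case 3 then show ?thesis using subgroup.one_closed[OF sub] unfolding a_def by simp
      qed
    qed
    obtain x where x: "x \<in> (\<Inter>i<K. a i <#\<^bsub>P\<^esub> S)" using large aG by blast
    have xa: "\<exists>s\<in>S. x = a i \<otimes>\<^bsub>P\<^esub> s" if "i < K" for i
    proof -
      have "x \<in> a i <#\<^bsub>P\<^esub> S" using x that by blast
      then show ?thesis unfolding l_coset_def by blast
    qed
    have SG: "S \<subseteq> G" unfolding S_def by blast
    have xG: "x \<in> G"
    proof -
      obtain s where s: "s \<in> S" "x = a 0 \<otimes>\<^bsub>P\<^esub> s" using xa[OF kpos] by blast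
      have "a 0 \<in> G" using aG kpos by blast
      moreover have "s \<in> G" using s SG by blast
      ultimately have "a 0 \<otimes>\<^bsub>P\<^esub> s \<in> G" by (rule subgroup.m_closed[OF sub])
      then show ?thesis using s by simp
    qed
    define r where "r = inv_into G \<sigma> (\<sigma> x)"
    have rG: "r \<in> G" unfolding r_def using xG by (rule inv_into_into[OF imageI])
    have \<sigma>r: "\<sigma> r = \<sigma> x" unfolding r_def using xG by (simp add: f_inv_into_f)
    have "r \<in> R" unfolding R_def r_def using xG by blast
    then obtain t where t: "t < L" "rs!t = r" using rs(2) in_set_conv_nth[of r rs] unfolding L_def by blast
    obtain s1 where s1: "s1 \<in> S" "x = r \<otimes>\<^bsub>P\<^esub> s1"
    proof -
      have "t < K" "a t = r" using t L unfolding a_def by auto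
      then show ?thesis using xa[of t] that by metis
    qed
    obtain s2 where s2: "s2 \<in> S" "x = (r \<otimes>\<^bsub>P\<^esub> inv\<^bsub>P\<^esub> h0) \<otimes>\<^bsub>P\<^esub> s2"
    proof -
      have "L + t < K" "a (L+t) = r \<otimes>\<^bsub>P\<^esub> inv\<^bsub>P\<^esub> h0" using t L unfolding a_def by auto
      then show ?thesis using xa[of "L+t"] that by metis
    qed
    have rc: "r \<in> carrier P" and h0c: "h0 \<in> carrier P" and s1c: "s1 \<in> carrier P" and s2c: "s2 \<in> carrier P"
      using rG h0 s1 s2 SG GP by auto
    have "r \<otimes>\<^bsub>P\<^esub> s1 = r \<otimes>\<^bsub>P\<^esub> (inv\<^bsub>P\<^esub> h0 \<otimes>\<^bsub>P\<^esub> s2)"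
      using s1 s2 rc h0c s2c by (simp add: P.m_assoc)
    then have "s1 = inv\<^bsub>P\<^esub> h0 \<otimes>\<^bsub>P\<^esub> s2" using rc h0c s1c s2c by simp
    then have s2e: "s2 = h0 \<otimes>\<^bsub>P\<^esub> s1" using h0c s1c s2c by (simp add: P.inv_solve_left)
    have comm: "s1 i \<otimes>\<^bsub>G1\<^esub> \<tau> v = \<tau> v \<otimes>\<^bsub>G1\<^esub> s1 i" if i: "i < n" and v: "v \<in> Inl ` {..<n} \<union> Inr ` {..<m}" for i v
    proof -
      have iv: "(i,v) \<in> I" using i v unfolding I_def by blast
      have eq: "centralizer_elem G1 (\<tau> v) #>\<^bsub>G1\<^esub> inv\<^bsub>G1\<^esub> (r i) = centralizer_elem G1 (\<tau> v) #>\<^bsub>G1\<^esub> inv\<^bsub>G1\<^esub> (x i)"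
        using fun_cong[OF \<sigma>r, of "(i,v)"] iv unfolding \<sigma>_def by simp
      have ri: "r i \<in> carrier G1" and xi: "x i \<in> carrier G1" and s1i: "s1 i \<in> carrier G1"
        using Gc rG xG s1 SG i by auto
      have one: "\<one>\<^bsub>G1\<^esub> \<in> centralizer_elem G1 (\<tau> v)"
        using \<tau>c[OF v] unfolding centralizer_elem_def by simp
      have "inv\<^bsub>G1\<^esub> (r i) \<otimes>\<^bsub>G1\<^esub> inv\<^bsub>G1\<^esub> (inv\<^bsub>G1\<^esub> (x i)) \<in> centralizer_elem G1 (\<tau> v)"
        by (rule rcos_eq_mem[OF gr Csub one _ _ eq]) (use ri xi in auto)
      moreover have "x i = r i \<otimes>\<^bsub>G1\<^esub> s1 i" using s1(2) multP i by simp
      ultimately have "s1 i \<in> centralizer_elem G1 (\<tau> v)" using ri s1i xi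
        by (simp add: G1.m_assoc[symmetric])
      then show ?thesis unfolding centralizer_elem_def by simp
    qed
    show ?thesis
    proof (intro bexI conjI allI impI)
      show "s1 \<in> G" using s1 SG by blast
      show "s1 \<in> S" by fact
      show "h0 \<otimes>\<^bsub>P\<^esub> s1 \<in> S" using s2 s2e by simp
      show "s1 i \<otimes>\<^bsub>G1\<^esub> h0 i' = h0 i' \<otimes>\<^bsub>G1\<^esub> s1 i" if "i < n" "i' < n" for i i'
        using comm[of i "Inl i'"] that unfolding \<tau>_def by simp
      show "s1 i \<otimes>\<^bsub>G1\<^esub> g j = g j \<otimes>\<^bsub>G1\<^esub> s1 i" if "i < n" "j < m" for i j
        using comm[of i "Inr j"] that unfolding \<tau>_def by simp
    qed
  qed
  have const: "word_eval G1 w h0 g = word_eval G1 w one1 g" if h0: "h0 \<in> G" for h0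
  proof -
    obtain d where d: "d \<in> G" "d \<in> S" "h0 \<otimes>\<^bsub>P\<^esub> d \<in> S"
      "\<forall>i<n. \<forall>i'<n. d i \<otimes>\<^bsub>G1\<^esub> h0 i' = h0 i' \<otimes>\<^bsub>G1\<^esub> d i"
      "\<forall>i<n. \<forall>j<m. d i \<otimes>\<^bsub>G1\<^esub> g j = g j \<otimes>\<^bsub>G1\<^esub> d i"
      using key[OF h0] by blast
    have dc: "\<forall>i<n. d i \<in> carrier G1" and h0c: "\<forall>i<n. h0 i \<in> carrier G1"
      using Gc d h0 by auto
    have "c = word_eval G1 w (h0 \<otimes>\<^bsub>P\<^esub> d) g" using d(3) unfolding S_def by simp
    also have "\<dots> = word_eval G1 w (\<lambda>i. h0 i \<otimes>\<^bsub>G1\<^esub> d i) g"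
      by (rule word_eval_cong[OF assms(5)]) (simp add: multP)
    also have "\<dots> = word_eval G1 w h0 g \<otimes>\<^bsub>G1\<^esub> word_eval G1 w d one1"
      unfolding one1_def by (rule word_eval_mult[OF gr assms(5) h0c assms(6) dc d(4,5)])
    finally have e1: "c = word_eval G1 w h0 g \<otimes>\<^bsub>G1\<^esub> word_eval G1 w d one1" .
    have "c = word_eval G1 w d g" using d(2) unfolding S_def by simp
    also have "\<dots> = word_eval G1 w (\<lambda>i. one1 i \<otimes>\<^bsub>G1\<^esub> d i) g"
      by (rule word_eval_cong[OF assms(5)]) (use dc in \<open>simp add: one1_def\<close>)
    also have "\<dots> = word_eval G1 w one1 g \<otimes>\<^bsub>G1\<^esub> word_eval G1 w d one1"
      unfolding one1_def
      by (rule word_eval_mult[OF gr assms(5) _ assms(6) dc]) (use dc d(5) in auto)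
    finally have e2: "c = word_eval G1 w one1 g \<otimes>\<^bsub>G1\<^esub> word_eval G1 w d one1" .
    have c1: "word_eval G1 w h0 g \<in> carrier G1" by (rule word_eval_closed[OF gr assms(5) h0c assms(6)])
    have c2: "word_eval G1 w one1 g \<in> carrier G1" by (rule word_eval_closed[OF gr assms(5) _ assms(6)]) (simp add: one1_def)
    have c3: "word_eval G1 w d one1 \<in> carrier G1" by (rule word_eval_closed[OF gr assms(5) dc]) (simp add: one1_def)
    show ?thesis using e1 e2 c1 c2 c3 G1.right_cancel by metis
  qed
  obtain s where s: "s \<in> S"
  proof -
    have "\<one>\<^bsub>P\<^esub> \<in> G" using sub subgroup.one_closed by blast
    then show ?thesis using key that by blast
  qed
  show ?thesis
  proof
    fix h assume h: "h \<in> G"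
    have "word_eval G1 w h g = word_eval G1 w one1 g" using const[OF h] .
    also have "\<dots> = word_eval G1 w s g" using const[of s] s unfolding S_def by simp
    also have "\<dots> = c" using s unfolding S_def by simp
    finally show "word_eval G1 w h g = c" .
  qed
qed

end
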